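(* Drift-less setting with target $\rho_d=|\Psi\rangle\langle\Psi|$. Let $\mathcal H'\subseteq\mathcal H$ be a subspace and suppose QL operators $D_k=D_{\mathcal N_k}\otimes I_{\bar{\mathcal N}_k}$ with $D_k|\Psi\rangle=0$ for all $k$ make $\rho_d$ conditionally asymptotically stable relative to $\mathcal H'$ for $\mathcal L(0,\{D_k\})$ (i.e. $\rho_d$ is $\mathcal H'$-DQLS via these $D_k$). Then $\mathcal H'\subseteq\mathcal H\ominus\mathcal H_w=\mathcal H_d\oplus(\mathcal H\ominus\mathcal H_0)$.
   Context: $\mathcal H=\bigotimes_{a=1}^n\mathcal H_a$ finite-dimensional; neighborhoods $\mathcal N_k\subsetneq\{1,\dots,n\}$. $\mathcal L(0,\{D_k\})(\rho)=\sum_k(D_k\rho D_k^\dagger-\frac12\{D_k^\dagger D_k,\rho\})$. Conditional asymptotic stability relative to $\mathcal H'$: $e^{\mathcal Lt}(\rho_0)\to\rho_d$ for all density operators $\rho_0$ with support in $\mathcal H'$. $\mathcal H_d=\mathrm{span}\{|\Psi\rangle\}$; $\rho_{\mathcal N_k}=\mathrm{Tr}_{\bar{\mathcal N}_k}\rho_d$; $\mathcal H_0=\bigcap_k\mathrm{supp}(\rho_{\mathcal N_k}\otimes I_{\bar{\mathcal N}_k})$; $\mathcal H_w=\mathcal H_0\ominus\mathcal H_d$ (orthogonal complement of $\mathcal H_d$ in $\mathcal H_0$). *)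

theory Defs
  imports Complex_Main
begin

text \<open>Finite-dimensional multipartite Hilbert space H = tensor product of H_a, a < n,
  dim H_a = d a. Computational basis states are configurations x :: nat => nat with
  x a < d a for a < n and x a = 0 for a >= n. Vectors are complex functions on
  configurations (zero outside), operators are complex matrices indexed by configurations.\<close>

type_synonym cfg = "nat \<Rightarrow> nat"
type_synonym vec = "cfg \<Rightarrow> complex"
type_synonym op = "cfg \<Rightarrow> cfg \<Rightarrow> complex"

definition cfgs :: "nat \<Rightarrow> (nat \<Rightarrow> nat) \<Rightarrow> cfg set" where
  "cfgs n d = {x. \<forall>a. (a < n \<longrightarrow> x a < d a) \<and> (n \<le> a \<longrightarrow> x a = 0)}"

definition vecs :: "cfg set \<Rightarrow> vec set" where
  "vecs C = {v. \<forall>x. x \<notin> C \<longrightarrow> v x = 0}"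

definition is_subspace :: "cfg set \<Rightarrow> vec set \<Rightarrow> bool" where
  "is_subspace C S \<longleftrightarrow> S \<subseteq> vecs C \<and> (\<lambda>_. 0) \<in> S \<and>
     (\<forall>v\<in>S. \<forall>w\<in>S. (\<lambda>x. v x + w x) \<in> S) \<and> (\<forall>c. \<forall>v\<in>S. (\<lambda>x. c * v x) \<in> S)"

definition inner_c :: "cfg set \<Rightarrow> vec \<Rightarrow> vec \<Rightarrow> complex" where
  "inner_c C v w = (\<Sum>x\<in>C. cnj (v x) * w x)"

definition mvec :: "cfg set \<Rightarrow> op \<Rightarrow> vec \<Rightarrow> vec" where
  "mvec C A v = (\<lambda>x. if x \<in> C then (\<Sum>y\<in>C. A x y * v y) else 0)"

definition mmul :: "cfg set \<Rightarrow> op \<Rightarrow> op \<Rightarrow> op" where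
  "mmul C A B = (\<lambda>x y. \<Sum>z\<in>C. A x z * B z y)"

definition adj :: "op \<Rightarrow> op" where
  "adj A = (\<lambda>x y. cnj (A y x))"

definition trace_c :: "cfg set \<Rightarrow> op \<Rightarrow> complex" where
  "trace_c C A = (\<Sum>x\<in>C. A x x)"

definition supp_op :: "cfg set \<Rightarrow> op \<Rightarrow> vec set" where
  "supp_op C A = {w. \<exists>v\<in>vecs C. w = mvec C A v}"

definition density :: "cfg set \<Rightarrow> op \<Rightarrow> bool" where
  "density C \<rho> \<longleftrightarrow> (\<forall>v\<in>vecs C. Im (inner_c C v (mvec C \<rho> v)) = 0
        \<and> 0 \<le> Re (inner_c C v (mvec C \<rho> v))) \<and> trace_c C \<rho> = 1"

definition restr :: "nat set \<Rightarrow> cfg \<Rightarrow> cfg" where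
  "restr N x = (\<lambda>a. if a \<in> N then x a else 0)"

definition merge :: "nat set \<Rightarrow> cfg \<Rightarrow> cfg \<Rightarrow> cfg" where
  "merge N u z = (\<lambda>a. if a \<in> N then u a else z a)"

text \<open>X_N tensor identity on the complement of N (X_N acts on configurations restricted to N).\<close>
definition tensor_id :: "nat set \<Rightarrow> op \<Rightarrow> op" where
  "tensor_id N XN = (\<lambda>x y. XN (restr N x) (restr N y) *
      (if \<forall>a. a \<notin> N \<longrightarrow> x a = y a then 1 else 0))"

definition ql_op :: "cfg set \<Rightarrow> nat set \<Rightarrow> op \<Rightarrow> bool" where
  "ql_op C N D \<longleftrightarrow> (\<exists>DN. \<forall>x\<in>C. \<forall>y\<in>C. D x y = tensor_id N DN x y)"

text \<open>Partial trace over the complement of N (result indexed by configurations restricted to N).\<close>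
definition ptrace :: "cfg set \<Rightarrow> nat set \<Rightarrow> op \<Rightarrow> op" where
  "ptrace C N \<rho> = (\<lambda>u v. \<Sum>z\<in>{z\<in>C. \<forall>a\<in>N. z a = 0}. \<rho> (merge N u z) (merge N v z))"

definition lind :: "cfg set \<Rightarrow> nat \<Rightarrow> (nat \<Rightarrow> op) \<Rightarrow> op \<Rightarrow> op" where
  "lind C m D \<rho> = (\<lambda>x y. \<Sum>k<m.
      mmul C (mmul C (D k) \<rho>) (adj (D k)) x y
      - (1/2) * (mmul C (mmul C (adj (D k)) (D k)) \<rho> x y
                 + mmul C \<rho> (mmul C (adj (D k)) (D k)) x y))"

text \<open>Semigroup e^{Lt} via the exponential series.\<close>
definition evol :: "(op \<Rightarrow> op) \<Rightarrow> real \<Rightarrow> op \<Rightarrow> op" where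
  "evol L t \<rho> = (\<lambda>x y. \<Sum>j. complex_of_real (t ^ j / fact j) * (L ^^ j) \<rho> x y)"

definition cond_asym_stable :: "cfg set \<Rightarrow> (op \<Rightarrow> op) \<Rightarrow> op \<Rightarrow> vec set \<Rightarrow> bool" where
  "cond_asym_stable C L \<rho>d H' \<longleftrightarrow>
     (\<forall>\<rho>0. density C \<rho>0 \<and> supp_op C \<rho>0 \<subseteq> H' \<longrightarrow>
        (\<forall>x\<in>C. \<forall>y\<in>C. ((\<lambda>t. evol L t \<rho>0 x y) \<longlongrightarrow> \<rho>d x y) at_top))"

definition proj :: "vec \<Rightarrow> op" where
  "proj \<Psi> = (\<lambda>x y. \<Psi> x * cnj (\<Psi> y))"

definition H0 :: "cfg set \<Rightarrow> nat \<Rightarrow> (nat \<Rightarrow> nat set) \<Rightarrow> op \<Rightarrow> vec set" where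
  "H0 C m N \<rho>d = {v\<in>vecs C. \<forall>k<m. v \<in> supp_op C (tensor_id (N k) (ptrace C (N k) \<rho>d))}"

text \<open>H_w = H_0 minus H_d (orthogonal complement of span Psi inside H_0).\<close>
definition Hw :: "cfg set \<Rightarrow> nat \<Rightarrow> (nat \<Rightarrow> nat set) \<Rightarrow> vec \<Rightarrow> vec set" where
  "Hw C m N \<Psi> = {w\<in>H0 C m N (proj \<Psi>). inner_c C \<Psi> w = 0}"

definition orth_compl :: "cfg set \<Rightarrow> vec set \<Rightarrow> vec set" where
  "orth_compl C S = {v\<in>vecs C. \<forall>w\<in>S. inner_c C w v = 0}"

end

theory Submission
  imports Defs "HOL-Library.FuncSet"
begin

lemma finite_cfgs: "finite (cfgs n d)"
proof -
  have "cfgs n d \<subseteq> (\<lambda>f a. if a < n then f a else 0) ` (PiE {..<n} (\<lambda>a. {..<d a}))"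
  proof
    fix x assume x: "x \<in> cfgs n d"
    define f where "f = (\<lambda>a. if a < n then x a else undefined)"
    have 1: "f \<in> PiE {..<n} (\<lambda>a. {..<d a})" using x unfolding cfgs_def PiE_def extensional_def f_def by auto
    have 2: "x = (\<lambda>a. if a < n then f a else 0)" using x unfolding f_def cfgs_def by (auto simp: fun_eq_iff)
    show "x \<in> (\<lambda>f a. if a < n then f a else 0) ` (PiE {..<n} (\<lambda>a. {..<d a}))" by (rule image_eqI[OF _ 1]) (simp add: 2[symmetric])
  qed
  moreover have "finite (PiE {..<n} (\<lambda>a. {..<d a}))" by (rule finite_PiE) auto
  ultimately show ?thesis by (meson finite_imageI finite_subset)
qed
definition nm :: "cfg set \<Rightarrow> op \<Rightarrow> real" where
  "nm C X = (\<Sum>x\<in>C. \<Sum>y\<in>C. cmod (X x y))"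

lemma nm_nonneg: "0 \<le> nm C X" unfolding nm_def by (intro sum_nonneg norm_ge_zero)

lemma le_sum_mem: "finite A \<Longrightarrow> i \<in> A \<Longrightarrow> (\<And>x. 0 \<le> f x) \<Longrightarrow> f i \<le> (\<Sum>x\<in>A. (f x::real))"
  by (rule member_le_sum) auto

lemma nm_entry: "finite C \<Longrightarrow> x \<in> C \<Longrightarrow> y \<in> C \<Longrightarrow> cmod (X x y) \<le> nm C X"
proof -
  assume f: "finite C" and x: "x \<in> C" and y: "y \<in> C"
  have "cmod (X x y) \<le> (\<Sum>y\<in>C. cmod (X x y))" using f y by (rule le_sum_mem) simp
  also have "\<dots> \<le> nm C X" unfolding nm_def using f x
    by (rule le_sum_mem[where f="\<lambda>x. \<Sum>y\<in>C. cmod (X x y)"]) (intro sum_nonneg norm_ge_zero)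
  finally show ?thesis .
qed

lemma nm_mmul: "nm C (mmul C A B) \<le> nm C A * nm C B"
proof (cases "finite C")
  case f: True
  have "nm C (mmul C A B) \<le> (\<Sum>x\<in>C. \<Sum>y\<in>C. \<Sum>z\<in>C. cmod (A x z) * cmod (B z y))"
    unfolding nm_def mmul_def
    by (intro sum_mono order.trans[OF norm_sum]) (simp add: norm_mult)
  also have "\<dots> = (\<Sum>x\<in>C. \<Sum>z\<in>C. \<Sum>y\<in>C. cmod (A x z) * cmod (B z y))"
    by (rule sum.cong[OF refl], rule sum.swap)
  also have "\<dots> \<le> (\<Sum>x\<in>C. \<Sum>z\<in>C. \<Sum>z'\<in>C. \<Sum>y\<in>C. cmod (A x z) * cmod (B z' y))"
    by (intro sum_mono le_sum_mem[where f="\<lambda>z'. \<Sum>y\<in>C. cmod (A _ _) * cmod (B z' y)"] f)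
       (auto intro!: sum_nonneg)
  also have "\<dots> = nm C A * nm C B"
    unfolding nm_def sum_distrib_right by (simp only: sum_distrib_left)
  finally show ?thesis .
qed (simp add: nm_def)

lemma nm_adj: "nm C (adj A) = nm C A"
  unfolding nm_def adj_def by (simp, rule sum.swap)


lemma nm_add: "nm C (\<lambda>x y. X x y + Y x y) \<le> nm C X + nm C Y"
proof -
  have "nm C (\<lambda>x y. X x y + Y x y) \<le> (\<Sum>x\<in>C. \<Sum>y\<in>C. cmod (X x y) + cmod (Y x y))"
    unfolding nm_def by (intro sum_mono norm_triangle_ineq)
  also have "\<dots> = nm C X + nm C Y" unfolding nm_def by (simp only: sum.distrib)
  finally show ?thesis .
qed

lemma nm_diff: "nm C (\<lambda>x y. X x y - Y x y) \<le> nm C X + nm C Y"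
proof -
  have "nm C (\<lambda>x y. X x y - Y x y) \<le> (\<Sum>x\<in>C. \<Sum>y\<in>C. cmod (X x y) + cmod (Y x y))"
    unfolding nm_def by (intro sum_mono norm_triangle_ineq4)
  also have "\<dots> = nm C X + nm C Y" unfolding nm_def by (simp only: sum.distrib)
  finally show ?thesis .
qed

lemma nm_scale: "nm C (\<lambda>x y. c * X x y) = cmod c * nm C X"
  unfolding nm_def by (simp add: sum_distrib_left norm_mult)

lemma nm_sum: "nm C (\<lambda>x y. \<Sum>k\<in>K. F k x y) \<le> (\<Sum>k\<in>K. nm C (F k))"
proof -
  have "nm C (\<lambda>x y. \<Sum>k\<in>K. F k x y) \<le> (\<Sum>x\<in>C. \<Sum>y\<in>C. \<Sum>k\<in>K. cmod (F k x y))"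
    unfolding nm_def by (intro sum_mono norm_sum)
  also have "\<dots> = (\<Sum>x\<in>C. \<Sum>k\<in>K. \<Sum>y\<in>C. cmod (F k x y))"
    by (rule sum.cong[OF refl], rule sum.swap)
  also have "\<dots> = (\<Sum>k\<in>K. \<Sum>x\<in>C. \<Sum>y\<in>C. cmod (F k x y))"
    by (rule sum.swap)
  also have "\<dots> = (\<Sum>k\<in>K. nm C (F k))" unfolding nm_def ..
  finally show ?thesis .
qed

lemma nm_cong: "(\<And>x y. x \<in> C \<Longrightarrow> y \<in> C \<Longrightarrow> X x y = Y x y) \<Longrightarrow> nm C X = nm C Y"
  unfolding nm_def by simp

lemma mmul_add_right: "mmul C A (\<lambda>x y. X x y + Y x y) = (\<lambda>x y. mmul C A X x y + mmul C A Y x y)"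
  unfolding mmul_def by (simp add: distrib_left sum.distrib)
lemma mmul_add_left: "mmul C (\<lambda>x y. X x y + Y x y) A = (\<lambda>x y. mmul C X A x y + mmul C Y A x y)"
  unfolding mmul_def by (simp add: distrib_right sum.distrib)
lemma mmul_scale_right: "mmul C A (\<lambda>x y. c * X x y) = (\<lambda>x y. c * mmul C A X x y)"
  unfolding mmul_def by (simp add: sum_distrib_left mult_ac)
lemma mmul_scale_left: "mmul C (\<lambda>x y. c * X x y) A = (\<lambda>x y. c * mmul C X A x y)"
  unfolding mmul_def by (simp add: sum_distrib_left mult_ac)

lemma lind_add: "lind C m D (\<lambda>x y. X x y + Y x y) x y = lind C m D X x y + lind C m D Y x y"
  unfolding lind_def mmul_add_right mmul_add_left
  by (simp add: sum.distrib[symmetric] algebra_simps)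

lemma lind_scale: "lind C m D (\<lambda>x y. c * X x y) x y = c * lind C m D X x y"
  unfolding lind_def mmul_scale_right mmul_scale_left
  by (simp add: sum_distrib_left algebra_simps)

lemma lind_bound: "nm C (lind C m D X) \<le> (\<Sum>k<m. 2 * nm C (D k) ^ 2) * nm C X"
proof -
  let ?T = "\<lambda>k x y. mmul C (mmul C (D k) X) (adj (D k)) x y
      - (1/2) * (mmul C (mmul C (adj (D k)) (D k)) X x y
                 + mmul C X (mmul C (adj (D k)) (D k)) x y)"
  have "nm C (lind C m D X) \<le> (\<Sum>k<m. nm C (?T k))"
    unfolding lind_def by (rule nm_sum)
  also have "\<dots> \<le> (\<Sum>k<m. 2 * nm C (D k) ^ 2 * nm C X)"
  proof (rule sum_mono)
    fix k
    let ?a = "nm C (D k)"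
    have 1: "nm C (mmul C (mmul C (D k) X) (adj (D k))) \<le> ?a * nm C X * ?a"
      by (metis nm_adj nm_mmul nm_nonneg mult_right_mono order.trans)
    have 2: "nm C (mmul C (mmul C (adj (D k)) (D k)) X) \<le> ?a * ?a * nm C X"
      by (metis nm_adj nm_mmul nm_nonneg mult_right_mono order.trans)
    have 3: "nm C (mmul C X (mmul C (adj (D k)) (D k))) \<le> nm C X * (?a * ?a)"
      by (metis nm_adj nm_mmul nm_nonneg mult_left_mono order.trans)
    have "nm C (?T k) \<le> nm C (mmul C (mmul C (D k) X) (adj (D k)))
        + nm C (\<lambda>x y. (1/2) * (mmul C (mmul C (adj (D k)) (D k)) X x y
                 + mmul C X (mmul C (adj (D k)) (D k)) x y))"
      by (rule nm_diff)
    also have "\<dots> \<le> nm C (mmul C (mmul C (D k) X) (adj (D k)))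
        + (1/2) * (nm C (mmul C (mmul C (adj (D k)) (D k)) X)
                 + nm C (mmul C X (mmul C (adj (D k)) (D k))))"
      unfolding nm_scale using nm_add by simp
    also have "\<dots> \<le> 2 * ?a ^ 2 * nm C X"
      using 1 2 3 by (simp add: power2_eq_square algebra_simps)
    finally show "nm C (?T k) \<le> 2 * ?a ^ 2 * nm C X" .
  qed
  also have "\<dots> = (\<Sum>k<m. 2 * nm C (D k) ^ 2) * nm C X" by (simp add: sum_distrib_right)
  finally show ?thesis .
qed


definition bf :: "cfg set \<Rightarrow> vec \<Rightarrow> op \<Rightarrow> vec \<Rightarrow> complex" where
  "bf C u X v = (\<Sum>x\<in>C. \<Sum>y\<in>C. cnj (u x) * X x y * v y)"

lemma bf_mmul_right: "bf C u (mmul C X B) v = bf C u X (mvec C B v)"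
proof -
  have "bf C u (mmul C X B) v = (\<Sum>x\<in>C. \<Sum>y\<in>C. \<Sum>z\<in>C. cnj (u x) * X x z * B z y * v y)"
    unfolding bf_def mmul_def by (simp add: sum_distrib_left sum_distrib_right mult.assoc)
  also have "\<dots> = (\<Sum>x\<in>C. \<Sum>z\<in>C. \<Sum>y\<in>C. cnj (u x) * X x z * B z y * v y)"
    by (rule sum.cong[OF refl], rule sum.swap)
  also have "\<dots> = bf C u X (mvec C B v)"
    unfolding bf_def mvec_def by (simp add: sum_distrib_left sum_distrib_right mult.assoc)
  finally show ?thesis .
qed

lemma bf_mmul_left: "bf C u (mmul C A X) v = bf C (mvec C (adj A) u) X v"
proof -
  have "bf C u (mmul C A X) v = (\<Sum>x\<in>C. \<Sum>y\<in>C. \<Sum>z\<in>C. cnj (u x) * A x z * X z y * v y)"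
    unfolding bf_def mmul_def by (simp add: sum_distrib_left sum_distrib_right mult.assoc)
  also have "\<dots> = (\<Sum>x\<in>C. \<Sum>z\<in>C. \<Sum>y\<in>C. cnj (u x) * A x z * X z y * v y)"
    by (rule sum.cong[OF refl], rule sum.swap)
  also have "\<dots> = (\<Sum>z\<in>C. \<Sum>x\<in>C. \<Sum>y\<in>C. cnj (u x) * A x z * X z y * v y)"
    by (rule sum.swap)
  also have "\<dots> = (\<Sum>z\<in>C. \<Sum>y\<in>C. \<Sum>x\<in>C. cnj (u x) * A x z * X z y * v y)"
    by (rule sum.cong[OF refl], rule sum.swap)
  also have "\<dots> = bf C (mvec C (adj A) u) X v"
    unfolding bf_def mvec_def adj_def by (simp add: sum_distrib_left sum_distrib_right mult_ac)
  finally show ?thesis .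
qed

lemma bf_cjg: "bf C u (mmul C (mmul C A X) (adj A)) v = bf C (mvec C (adj A) u) X (mvec C (adj A) v)"
  by (rule trans[OF bf_mmul_right bf_mmul_left])

lemma bf_add: "bf C u (\<lambda>x y. X x y + Y x y) v = bf C u X v + bf C u Y v"
  unfolding bf_def by (simp add: algebra_simps sum.distrib)
lemma bf_diff: "bf C u (\<lambda>x y. X x y - Y x y) v = bf C u X v - bf C u Y v"
  unfolding bf_def by (simp add: algebra_simps sum_subtractf)
lemma bf_scale: "bf C u (\<lambda>x y. c * X x y) v = c * bf C u X v"
  unfolding bf_def by (simp add: sum_distrib_left mult_ac)
lemma bf_sum: "bf C u (\<lambda>x y. \<Sum>k\<in>K. F k x y) v = (\<Sum>k\<in>K. bf C u (F k) v)"
proof -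
  have "bf C u (\<lambda>x y. \<Sum>k\<in>K. F k x y) v = (\<Sum>x\<in>C. \<Sum>y\<in>C. \<Sum>k\<in>K. cnj (u x) * F k x y * v y)"
    unfolding bf_def by (simp add: sum_distrib_left sum_distrib_right)
  also have "\<dots> = (\<Sum>x\<in>C. \<Sum>k\<in>K. \<Sum>y\<in>C. cnj (u x) * F k x y * v y)"
    by (rule sum.cong[OF refl], rule sum.swap)
  also have "\<dots> = (\<Sum>k\<in>K. \<Sum>x\<in>C. \<Sum>y\<in>C. cnj (u x) * F k x y * v y)"
    by (rule sum.swap)
  finally show ?thesis unfolding bf_def .
qed
lemma bf_cong: "(\<And>x y. x \<in> C \<Longrightarrow> y \<in> C \<Longrightarrow> X x y = Y x y) \<Longrightarrow> bf C u X v = bf C u Y v"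
  unfolding bf_def by simp

lemma bf_bound: assumes f: "finite C"
  shows "cmod (bf C u X u) \<le> (\<Sum>x\<in>C. cmod (u x))^2 * nm C X"
proof -
  let ?W = "\<Sum>x\<in>C. cmod (u x)"
  have "cmod (bf C u X u) \<le> (\<Sum>x\<in>C. \<Sum>y\<in>C. ?W * ?W * cmod (X x y))"
    unfolding bf_def
  proof (intro order.trans[OF norm_sum] sum_mono order.trans[OF norm_sum])
    fix x y assume x: "x \<in> C" and y: "y \<in> C"
    have ux: "cmod (u x) \<le> ?W" using f x by (rule le_sum_mem) simp
    have uy: "cmod (u y) \<le> ?W" using f y by (rule le_sum_mem) simp
    have "cmod (cnj (u x) * X x y * u y) = cmod (u x) * cmod (u y) * cmod (X x y)"
      by (simp add: norm_mult)
    also have "\<dots> \<le> ?W * ?W * cmod (X x y)"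
      by (intro mult_right_mono mult_mono ux uy) (auto intro: sum_nonneg)
    finally show "cmod (cnj (u x) * X x y * u y) \<le> ?W * ?W * cmod (X x y)" .
  qed
  also have "\<dots> = ?W^2 * nm C X" unfolding nm_def by (simp add: sum_distrib_left power2_eq_square)
  finally show ?thesis .
qed


definition Kop :: "cfg set \<Rightarrow> nat \<Rightarrow> (nat \<Rightarrow> op) \<Rightarrow> op" where
  "Kop C m D = (\<lambda>x y. -(1/2) * (\<Sum>k<m. mmul C (adj (D k)) (D k) x y))"

definition idop :: op where "idop = (\<lambda>x y. if x = y then 1 else 0)"

definition Gop :: "cfg set \<Rightarrow> nat \<Rightarrow> (nat \<Rightarrow> op) \<Rightarrow> real \<Rightarrow> op" where
  "Gop C m D e = (\<lambda>x y. idop x y + of_real e * Kop C m D x y)"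

definition cjg :: "cfg set \<Rightarrow> op \<Rightarrow> op \<Rightarrow> op" where
  "cjg C A X = mmul C (mmul C A X) (adj A)"

definition Amap :: "cfg set \<Rightarrow> nat \<Rightarrow> (nat \<Rightarrow> op) \<Rightarrow> real \<Rightarrow> op \<Rightarrow> op" where
  "Amap C m D e X = (\<lambda>x y. X x y + of_real e * lind C m D X x y)"

definition Bmap :: "cfg set \<Rightarrow> nat \<Rightarrow> (nat \<Rightarrow> op) \<Rightarrow> real \<Rightarrow> op \<Rightarrow> op" where
  "Bmap C m D e X = (\<lambda>x y. cjg C (Gop C m D e) X x y + of_real e * (\<Sum>k<m. cjg C (D k) X x y))"

lemma adj_mmul: "adj (mmul C A B) = mmul C (adj B) (adj A)"
  unfolding adj_def mmul_def by (simp add: mult.commute)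

lemma adj_adj: "adj (adj A) = A" unfolding adj_def by simp

lemma adj_Kop: "adj (Kop C m D) = Kop C m D"
proof -
  have "adj (mmul C (adj (D k)) (D k)) = mmul C (adj (D k)) (D k)" for k
    by (simp add: adj_mmul adj_adj)
  hence "cnj (mmul C (adj (D k)) (D k) y x) = mmul C (adj (D k)) (D k) x y" for k x y
    unfolding adj_def by metis
  thus ?thesis unfolding adj_def Kop_def by simp
qed

lemma adj_Gop: "adj (Gop C m D e) = Gop C m D e"
proof -
  have "cnj (Kop C m D y x) = Kop C m D x y" for x y using adj_Kop[of C m D] unfolding adj_def by metis
  thus ?thesis unfolding adj_def Gop_def idop_def by (auto simp: fun_eq_iff)
qed

lemma mmul_Kop_left: "mmul C (Kop C m D) X x y = -(1/2) * (\<Sum>k<m. mmul C (mmul C (adj (D k)) (D k)) X x y)"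
proof -
  have e: "Kop C m D x z * X z y = -(1/2) * (\<Sum>k<m. mmul C (adj (D k)) (D k) x z * X z y)" for z
    unfolding Kop_def by (simp only: sum_distrib_right mult.assoc)
  have "mmul C (Kop C m D) X x y = (\<Sum>z\<in>C. Kop C m D x z * X z y)"
    by (simp only: mmul_def)
  also have "\<dots> = -(1/2) * (\<Sum>z\<in>C. \<Sum>k<m. mmul C (adj (D k)) (D k) x z * X z y)"
    by (simp only: e sum_distrib_left)
  also have "\<dots> = -(1/2) * (\<Sum>k<m. \<Sum>z\<in>C. mmul C (adj (D k)) (D k) x z * X z y)"
    by (subst sum.swap) (rule refl)
  finally show ?thesis unfolding mmul_def[of C "mmul C _ _" X] .
qed

lemma mmul_Kop_right: "mmul C X (Kop C m D) x y = -(1/2) * (\<Sum>k<m. mmul C X (mmul C (adj (D k)) (D k)) x y)"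
proof -
  have e: "X x z * Kop C m D z y = -(1/2) * (\<Sum>k<m. X x z * mmul C (adj (D k)) (D k) z y)" for z
    unfolding Kop_def by (simp only: sum_distrib_left mult.left_commute)
  have "mmul C X (Kop C m D) x y = (\<Sum>z\<in>C. X x z * Kop C m D z y)"
    by (simp only: mmul_def)
  also have "\<dots> = -(1/2) * (\<Sum>z\<in>C. \<Sum>k<m. X x z * mmul C (adj (D k)) (D k) z y)"
    by (simp only: e sum_distrib_left)
  also have "\<dots> = -(1/2) * (\<Sum>k<m. \<Sum>z\<in>C. X x z * mmul C (adj (D k)) (D k) z y)"
    by (subst sum.swap) (rule refl)
  finally show ?thesis unfolding mmul_def[of C X "mmul C _ _"] .
qed

lemma lind_decomp: "lind C m D X x y = (\<Sum>k<m. cjg C (D k) X x y) + mmul C (Kop C m D) X x y + mmul C X (Kop C m D) x y"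
proof -
  have "lind C m D X x y = (\<Sum>k<m. cjg C (D k) X x y) - (1/2) * ((\<Sum>k<m. mmul C (mmul C (adj (D k)) (D k)) X x y)
      + (\<Sum>k<m. mmul C X (mmul C (adj (D k)) (D k)) x y))"
    unfolding lind_def cjg_def by (simp only: sum_subtractf sum_distrib_left[symmetric] sum.distrib)
  thus ?thesis unfolding mmul_Kop_left mmul_Kop_right by (simp add: algebra_simps)
qed

lemma sum_idop_right: "finite C \<Longrightarrow> y \<in> C \<Longrightarrow> (\<Sum>z\<in>C. X x z * idop z y) = X x y"
proof -
  assume "finite C" "y \<in> C"
  have "(\<Sum>z\<in>C. X x z * idop z y) = (\<Sum>z\<in>C. if z = y then X x z else 0)"
    unfolding idop_def by (rule sum.cong) auto
  thus ?thesis using \<open>finite C\<close> \<open>y \<in> C\<close> by simp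
qed

lemma sum_idop_left: "finite C \<Longrightarrow> x \<in> C \<Longrightarrow> (\<Sum>z\<in>C. idop x z * X z y) = X x y"
proof -
  assume "finite C" "x \<in> C"
  have "(\<Sum>z\<in>C. idop x z * X z y) = (\<Sum>z\<in>C. if x = z then X z y else 0)"
    unfolding idop_def by (rule sum.cong) auto
  thus ?thesis using \<open>finite C\<close> \<open>x \<in> C\<close> by simp
qed

lemma mmul_id_plus_left: "finite C \<Longrightarrow> x \<in> C \<Longrightarrow>
   mmul C (\<lambda>x y. idop x y + c * A x y) X x y = X x y + c * mmul C A X x y"
proof -
  assume a: "finite C" "x \<in> C"
  have "mmul C (\<lambda>x y. idop x y + c * A x y) X x y = (\<Sum>z\<in>C. idop x z * X z y) + c * (\<Sum>z\<in>C. A x z * X z y)"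
    unfolding mmul_def by (simp add: distrib_right sum.distrib sum_distrib_left mult.assoc)
  thus ?thesis using sum_idop_left[OF a] unfolding mmul_def by simp
qed

lemma mmul_id_plus_right: "finite C \<Longrightarrow> y \<in> C \<Longrightarrow>
   mmul C X (\<lambda>x y. idop x y + c * A x y) x y = X x y + c * mmul C X A x y"
proof -
  assume a: "finite C" "y \<in> C"
  have "mmul C X (\<lambda>x y. idop x y + c * A x y) x y = (\<Sum>z\<in>C. X x z * idop z y) + c * (\<Sum>z\<in>C. X x z * A z y)"
    unfolding mmul_def by (simp add: distrib_left sum.distrib sum_distrib_left mult.left_commute)
  thus ?thesis using sum_idop_right[OF a] unfolding mmul_def by simp
qed


lemma mmul_G_left: "finite C \<Longrightarrow> x \<in> C \<Longrightarrow>
  mmul C (mmul C (Gop C m D e) X) B x y = mmul C X B x y + of_real e * mmul C (mmul C (Kop C m D) X) B x y"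
proof -
  assume a: "finite C" "x \<in> C"
  have "mmul C (mmul C (Gop C m D e) X) B x y = (\<Sum>z\<in>C. mmul C (Gop C m D e) X x z * B z y)"
    by (simp only: mmul_def[of C "mmul C _ _" B])
  also have "\<dots> = (\<Sum>z\<in>C. (X x z + of_real e * mmul C (Kop C m D) X x z) * B z y)"
    unfolding Gop_def using mmul_id_plus_left[OF a] by simp
  also have "\<dots> = mmul C X B x y + of_real e * mmul C (mmul C (Kop C m D) X) B x y"
    unfolding mmul_def[of C _ B] by (simp add: distrib_right sum.distrib sum_distrib_left mult.assoc)
  finally show ?thesis .
qed

lemma B_eq: assumes "finite C" "x \<in> C" "y \<in> C"
  shows "Bmap C m D e X x y = Amap C m D e X x y + (of_real e)^2 * cjg C (Kop C m D) X x y"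
proof -
  let ?G = "Gop C m D e" and ?K = "Kop C m D"
  have "cjg C ?G X x y = mmul C (mmul C ?G X) ?G x y" unfolding cjg_def adj_Gop ..
  also have "\<dots> = mmul C (mmul C ?G X) ?K x y * of_real e + mmul C ?G X x y"
  proof -
    have "mmul C Y ?G x y = Y x y + of_real e * mmul C Y ?K x y" for Y
      unfolding Gop_def by (rule mmul_id_plus_right[OF assms(1,3)])
    thus ?thesis by (simp add: algebra_simps)
  qed
  also have "\<dots> = (mmul C X ?K x y + of_real e * mmul C (mmul C ?K X) ?K x y) * of_real e + (X x y + of_real e * mmul C ?K X x y)"
    using mmul_G_left[OF assms(1,2)] mmul_id_plus_left[OF assms(1,2)] unfolding Gop_def by simp
  finally have 1: "cjg C ?G X x y = (mmul C X ?K x y + of_real e * mmul C (mmul C ?K X) ?K x y) * of_real e + (X x y + of_real e * mmul C ?K X x y)" .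
  show ?thesis unfolding Bmap_def Amap_def lind_decomp 1 unfolding cjg_def adj_Kop
    by (simp add: algebra_simps power2_eq_square)
qed

lemma lind_diff: "lind C m D (\<lambda>x y. X x y - Y x y) x y = lind C m D X x y - lind C m D Y x y"
proof -
  have "lind C m D X x y = lind C m D (\<lambda>x y. (X x y - Y x y) + Y x y) x y" by simp
  also have "\<dots> = lind C m D (\<lambda>x y. X x y - Y x y) x y + lind C m D Y x y" by (rule lind_add)
  finally show ?thesis by simp
qed

lemma nm_A: "nm C (Amap C m D e X) \<le> (1 + \<bar>e\<bar> * (\<Sum>k<m. 2 * nm C (D k) ^ 2)) * nm C X"
proof -
  have "nm C (Amap C m D e X) \<le> nm C X + nm C (\<lambda>x y. of_real e * lind C m D X x y)"
    unfolding Amap_def by (rule nm_add)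
  also have "\<dots> \<le> nm C X + \<bar>e\<bar> * ((\<Sum>k<m. 2 * nm C (D k) ^ 2) * nm C X)"
    unfolding nm_scale using lind_bound[of C m D X] by (simp add: mult_left_mono)
  finally show ?thesis by (simp add: algebra_simps)
qed

lemma nm_A_diff: "nm C (\<lambda>x y. Amap C m D e X x y - Amap C m D e Y x y)
   \<le> (1 + \<bar>e\<bar> * (\<Sum>k<m. 2 * nm C (D k) ^ 2)) * nm C (\<lambda>x y. X x y - Y x y)"
proof -
  have "(\<lambda>x y. Amap C m D e X x y - Amap C m D e Y x y) = Amap C m D e (\<lambda>x y. X x y - Y x y)"
    unfolding Amap_def lind_diff by (simp add: fun_eq_iff algebra_simps)
  thus ?thesis using nm_A by simp
qed

lemma nm_cjg: "nm C (cjg C A X) \<le> nm C A ^ 2 * nm C X"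
proof -
  have "nm C (cjg C A X) \<le> nm C (mmul C A X) * nm C A" unfolding cjg_def using nm_mmul nm_adj by metis
  also have "\<dots> \<le> nm C A * nm C X * nm C A" by (intro mult_right_mono nm_mmul nm_nonneg)
  finally show ?thesis by (simp add: power2_eq_square mult_ac)
qed

lemma nm_AB_diff: assumes "finite C"
  shows "nm C (\<lambda>x y. Bmap C m D e X x y - Amap C m D e X x y) \<le> e^2 * nm C (Kop C m D) ^ 2 * nm C X"
proof -
  have "nm C (\<lambda>x y. Bmap C m D e X x y - Amap C m D e X x y) = nm C (\<lambda>x y. (of_real (e^2)) * cjg C (Kop C m D) X x y)"
    by (rule nm_cong) (simp add: B_eq[OF assms])
  also have "\<dots> \<le> e^2 * (nm C (Kop C m D) ^ 2 * nm C X)" unfolding nm_scale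
    by (simp add: norm_power mult_left_mono nm_cjg)
  finally show ?thesis by (simp add: mult_ac)
qed

lemma nm_B: assumes "finite C"
  shows "nm C (Bmap C m D e X) \<le> (1 + \<bar>e\<bar> * (\<Sum>k<m. 2 * nm C (D k) ^ 2) + e^2 * nm C (Kop C m D) ^ 2) * nm C X"
proof -
  have "nm C (Bmap C m D e X) = nm C (\<lambda>x y. Amap C m D e X x y + (Bmap C m D e X x y - Amap C m D e X x y))"
    by (rule nm_cong) simp
  also have "\<dots> \<le> nm C (Amap C m D e X) + nm C (\<lambda>x y. Bmap C m D e X x y - Amap C m D e X x y)"
    by (rule nm_add)
  also have "\<dots> \<le> (1 + \<bar>e\<bar> * (\<Sum>k<m. 2 * nm C (D k) ^ 2)) * nm C X + e^2 * nm C (Kop C m D) ^ 2 * nm C X"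
    by (intro add_mono nm_A nm_AB_diff assms)
  finally show ?thesis by (simp add: algebra_simps)
qed


definition pos :: "cfg set \<Rightarrow> op \<Rightarrow> bool" where
  "pos C X \<longleftrightarrow> (\<forall>u\<in>vecs C. 0 \<le> Re (bf C u X u))"

lemma mvec_vecs: "mvec C A v \<in> vecs C"
  unfolding vecs_def mvec_def by simp

lemma pos_cjg: "pos C X \<Longrightarrow> pos C (cjg C A X)"
  unfolding pos_def cjg_def bf_cjg using mvec_vecs by blast

lemma bf_B: "bf C u (Bmap C m D e X) u = bf C (mvec C (adj (Gop C m D e)) u) X (mvec C (adj (Gop C m D e)) u)
   + of_real e * (\<Sum>k<m. bf C (mvec C (adj (D k)) u) X (mvec C (adj (D k)) u))"
  unfolding Bmap_def bf_add bf_scale bf_sum cjg_def bf_cjg ..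

lemma pos_B: assumes "0 \<le> e" "pos C X" shows "pos C (Bmap C m D e X)"
  unfolding pos_def
proof
  fix u assume u: "u \<in> vecs C"
  have 1: "0 \<le> Re (bf C (mvec C (adj (Gop C m D e)) u) X (mvec C (adj (Gop C m D e)) u))"
    using assms(2) mvec_vecs unfolding pos_def by blast
  have 2: "0 \<le> Re (\<Sum>k<m. bf C (mvec C (adj (D k)) u) X (mvec C (adj (D k)) u))"
    unfolding Re_sum using assms(2) mvec_vecs unfolding pos_def by (intro sum_nonneg) blast
  show "0 \<le> Re (bf C u (Bmap C m D e X) u)" unfolding bf_B using 1 2 assms(1) by simp
qed

lemma mvec_mmul: "mvec C (mmul C A B) v = mvec C A (mvec C B v)"
proof (rule ext)
  fix x
  show "mvec C (mmul C A B) v x = mvec C A (mvec C B v) x"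
  proof (cases "x \<in> C")
    case True
    have "mvec C (mmul C A B) v x = (\<Sum>y\<in>C. \<Sum>z\<in>C. A x z * B z y * v y)"
      using True unfolding mvec_def mmul_def by (simp add: sum_distrib_right)
    also have "\<dots> = (\<Sum>z\<in>C. \<Sum>y\<in>C. A x z * B z y * v y)" by (rule sum.swap)
    also have "\<dots> = mvec C A (mvec C B v) x"
      using True unfolding mvec_def by (simp add: sum_distrib_left mult.assoc)
    finally show ?thesis .
  qed (simp add: mvec_def)
qed

lemma mvec_zero: "mvec C A (\<lambda>_. 0) = (\<lambda>_. 0)" unfolding mvec_def by (simp add: fun_eq_iff)

lemma mvec_G_fix: assumes f: "finite C" and w: "w \<in> vecs C" and k: "\<forall>k<m. mvec C (D k) w = (\<lambda>_. 0)"
  shows "mvec C (Gop C m D e) w = w"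
proof (rule ext)
  fix x
  show "mvec C (Gop C m D e) w x = w x"
  proof (cases "x \<in> C")
    case True
    have z: "mvec C (mmul C (adj (D j)) (D j)) w x = 0" if "j < m" for j
      unfolding mvec_mmul using k that mvec_zero by metis
    have "mvec C (Gop C m D e) w x = (\<Sum>y\<in>C. idop x y * w y) + of_real e * (-(1/2)) * (\<Sum>j<m. \<Sum>y\<in>C. mmul C (adj (D j)) (D j) x y * w y)"
      using True unfolding mvec_def Gop_def Kop_def
      by (simp add: distrib_right sum.distrib sum_distrib_left sum_distrib_right mult.assoc)
         (subst sum.swap, rule refl)
    also have "(\<Sum>j<m. \<Sum>y\<in>C. mmul C (adj (D j)) (D j) x y * w y) = 0"
      using z True unfolding mvec_def by simp
    also have "(\<Sum>y\<in>C. idop x y * w y) = w x" using sum_idop_left[OF f True] .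
    finally show ?thesis by simp
  next
    case False thus ?thesis using w unfolding mvec_def vecs_def by simp
  qed
qed

lemma mono_B: assumes f: "finite C" and w: "w \<in> vecs C" and k: "\<forall>k<m. mvec C (D k) w = (\<lambda>_. 0)"
  and e: "0 \<le> e" and p: "pos C X"
  shows "Re (bf C w X w) \<le> Re (bf C w (Bmap C m D e X) w)"
proof -
  have 2: "0 \<le> Re (\<Sum>k<m. bf C (mvec C (adj (D k)) w) X (mvec C (adj (D k)) w))"
    unfolding Re_sum using p mvec_vecs unfolding pos_def by (intro sum_nonneg) blast
  show ?thesis unfolding bf_B adj_Gop mvec_G_fix[OF f w k] using 2 e by simp
qed


lemma pascal_aux: "(\<Sum>j\<le>n. of_nat (n choose j) * (T j::complex)) = T 0 + (\<Sum>j\<le>n. of_nat (n choose Suc j) * T (Suc j))"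
proof (cases n)
  case 0 thus ?thesis by simp
next
  case (Suc n')
  have "(\<Sum>j\<le>n. of_nat (n choose j) * T j) = T 0 + (\<Sum>j\<le>n'. of_nat (n choose Suc j) * T (Suc j))"
    unfolding Suc sum.atMost_Suc_shift by simp
  also have "(\<Sum>j\<le>n'. of_nat (n choose Suc j) * T (Suc j)) = (\<Sum>j\<le>n. of_nat (n choose Suc j) * T (Suc j))"
    unfolding Suc sum.atMost_Suc by (simp del: binomial_Suc_Suc add: binomial_eq_0)
  finally show ?thesis .
qed

lemma pascal: "(\<Sum>j\<le>n. of_nat (n choose j) * T j) + (\<Sum>j\<le>n. of_nat (n choose j) * T (Suc j))
   = (\<Sum>j\<le>Suc n. of_nat (Suc n choose j) * (T j::complex))"
proof -
  have "(\<Sum>j\<le>Suc n. of_nat (Suc n choose j) * T j) = T 0 + (\<Sum>j\<le>n. of_nat (Suc n choose Suc j) * T (Suc j))"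
    unfolding sum.atMost_Suc_shift by simp
  also have "\<dots> = T 0 + (\<Sum>j\<le>n. of_nat (n choose Suc j) * T (Suc j)) + (\<Sum>j\<le>n. of_nat (n choose j) * T (Suc j))"
    by (simp add: sum.distrib algebra_simps)
  finally show ?thesis unfolding pascal_aux by simp
qed

lemma lind_zero: "lind C m D (\<lambda>x y. 0) x y = 0"
  using lind_scale[of C m D 0 "\<lambda>x y. 0" x y] by simp

lemma lind_sumc: "finite J \<Longrightarrow> lind C m D (\<lambda>x y. \<Sum>j\<in>J. c j * F j x y) x y = (\<Sum>j\<in>J. c j * lind C m D (F j) x y)"
proof (induction J arbitrary: x y rule: finite_induct)
  case empty thus ?case using lind_zero by simp
next
  case (insert i J)
  have "lind C m D (\<lambda>x y. \<Sum>j\<in>insert i J. c j * F j x y) x y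
      = lind C m D (\<lambda>x y. c i * F i x y + (\<Sum>j\<in>J. c j * F j x y)) x y"
    using insert by simp
  also have "\<dots> = c i * lind C m D (F i) x y + lind C m D (\<lambda>x y. \<Sum>j\<in>J. c j * F j x y) x y"
    by (simp only: lind_add lind_scale)
  also have "\<dots> = (\<Sum>j\<in>insert i J. c j * lind C m D (F j) x y)"
    using insert by simp
  finally show ?case .
qed

lemma A_expand: "(Amap C m D e ^^ n) X = (\<lambda>x y. \<Sum>j\<le>n. of_nat (n choose j) * (of_real e ^ j * (lind C m D ^^ j) X x y))"
proof (induction n)
  case 0 thus ?case by simp
next
  case (Suc n)
  let ?T = "\<lambda>j x y. of_real e ^ j * (lind C m D ^^ j) X x y"
  have "(Amap C m D e ^^ Suc n) X = Amap C m D e (\<lambda>x y. \<Sum>j\<le>n. of_nat (n choose j) * ?T j x y)"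
    using Suc by simp
  also have "\<dots> = (\<lambda>x y. (\<Sum>j\<le>n. of_nat (n choose j) * ?T j x y) + (\<Sum>j\<le>n. of_nat (n choose j) * ?T (Suc j) x y))"
  proof (rule ext, rule ext)
    fix x y
    have "lind C m D (\<lambda>x y. \<Sum>j\<le>n. of_nat (n choose j) * ?T j x y) x y
        = lind C m D (\<lambda>x y. \<Sum>j\<le>n. (of_nat (n choose j) * of_real e ^ j) * (lind C m D ^^ j) X x y) x y"
      by (simp add: mult.assoc)
    also have "\<dots> = (\<Sum>j\<le>n. (of_nat (n choose j) * of_real e ^ j) * (lind C m D ^^ Suc j) X x y)"
      by (simp add: lind_sumc)
    finally have "of_real e * lind C m D (\<lambda>x y. \<Sum>j\<le>n. of_nat (n choose j) * ?T j x y) x y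
        = (\<Sum>j\<le>n. of_nat (n choose j) * ?T (Suc j) x y)"
      by (simp add: sum_distrib_left mult_ac)
    thus "Amap C m D e (\<lambda>x y. \<Sum>j\<le>n. of_nat (n choose j) * ?T j x y) x y =
      (\<Sum>j\<le>n. of_nat (n choose j) * ?T j x y) + (\<Sum>j\<le>n. of_nat (n choose j) * ?T (Suc j) x y)"
      unfolding Amap_def by simp
  qed
  also have "\<dots> = (\<lambda>x y. \<Sum>j\<le>Suc n. of_nat (Suc n choose j) * ?T j x y)"
    by (rule ext, rule ext, rule pascal)
  finally show ?case .
qed


definition Mc :: "cfg set \<Rightarrow> nat \<Rightarrow> (nat \<Rightarrow> op) \<Rightarrow> real" where
  "Mc C m D = (\<Sum>k<m. 2 * nm C (D k) ^ 2)"

lemma Mc_nonneg: "0 \<le> Mc C m D" unfolding Mc_def by (intro sum_nonneg) simp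

lemma nm_Lpow: "nm C ((lind C m D ^^ j) X) \<le> Mc C m D ^ j * nm C X"
proof (induction j)
  case 0 thus ?case by simp
next
  case (Suc j)
  have "nm C ((lind C m D ^^ Suc j) X) \<le> Mc C m D * nm C ((lind C m D ^^ j) X)"
    using lind_bound unfolding Mc_def by simp
  also have "\<dots> \<le> Mc C m D * (Mc C m D ^ j * nm C X)" by (intro mult_left_mono Suc Mc_nonneg)
  finally show ?case by (simp add: mult_ac)
qed

lemma B_iter_pos: assumes "finite C" "w \<in> vecs C" "\<forall>k<m. mvec C (D k) w = (\<lambda>_. 0)" "0 \<le> e" "pos C X"
  shows "pos C ((Bmap C m D e ^^ n) X) \<and> Re (bf C w X w) \<le> Re (bf C w ((Bmap C m D e ^^ n) X) w)"
proof (induction n)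
  case 0 thus ?case using assms by simp
next
  case (Suc n)
  thus ?case using pos_B[OF assms(4)] mono_B[OF assms(1-4)] by (auto intro: order.trans)
qed

lemma B_iter_nm: assumes "finite C" "0 \<le> e"
  shows "nm C ((Bmap C m D e ^^ n) X) \<le> (1 + e * Mc C m D + e^2 * nm C (Kop C m D) ^ 2) ^ n * nm C X"
proof (induction n)
  case 0 thus ?case by simp
next
  case (Suc n)
  let ?b = "1 + e * Mc C m D + e^2 * nm C (Kop C m D) ^ 2"
  have b: "0 \<le> ?b" using assms Mc_nonneg by (intro add_nonneg_nonneg) auto
  have "nm C ((Bmap C m D e ^^ Suc n) X) \<le> ?b * nm C ((Bmap C m D e ^^ n) X)"
    using nm_B[OF assms(1), of m D e "(Bmap C m D e ^^ n) X"] assms(2) unfolding Mc_def by (simp add: abs_of_nonneg)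
  also have "\<dots> \<le> ?b * (?b ^ n * nm C X)" by (intro mult_left_mono Suc b)
  finally show ?case by (simp add: mult_ac)
qed

lemma AB_iter_diff: assumes "finite C" "0 \<le> e"
  shows "nm C (\<lambda>x y. (Amap C m D e ^^ n) X x y - (Bmap C m D e ^^ n) X x y)
     \<le> real n * e^2 * nm C (Kop C m D) ^ 2 * (1 + e * Mc C m D + e^2 * nm C (Kop C m D) ^ 2) ^ n * nm C X"
proof (induction n)
  case 0 thus ?case by (simp add: nm_def)
next
  case (Suc n)
  let ?b = "1 + e * Mc C m D + e^2 * nm C (Kop C m D) ^ 2"
  let ?a = "1 + e * Mc C m D"
  let ?q = "nm C (Kop C m D) ^ 2"
  let ?An = "(Amap C m D e ^^ n) X" and ?Bn = "(Bmap C m D e ^^ n) X"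
  have ab: "?a \<le> ?b" by simp
  have a0: "0 \<le> ?a" using assms Mc_nonneg by simp
  have b1: "1 \<le> ?b" using assms Mc_nonneg by simp
  have "nm C (\<lambda>x y. (Amap C m D e ^^ Suc n) X x y - (Bmap C m D e ^^ Suc n) X x y)
     = nm C (\<lambda>x y. (Amap C m D e ?An x y - Amap C m D e ?Bn x y) + (Amap C m D e ?Bn x y - Bmap C m D e ?Bn x y))"
    by simp
  also have "\<dots> \<le> nm C (\<lambda>x y. Amap C m D e ?An x y - Amap C m D e ?Bn x y) + nm C (\<lambda>x y. Amap C m D e ?Bn x y - Bmap C m D e ?Bn x y)"
    by (rule nm_add)
  also have "nm C (\<lambda>x y. Amap C m D e ?Bn x y - Bmap C m D e ?Bn x y) = nm C (\<lambda>x y. Bmap C m D e ?Bn x y - Amap C m D e ?Bn x y)"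
    unfolding nm_def by (simp add: norm_minus_commute)
  also have "nm C (\<lambda>x y. Amap C m D e ?An x y - Amap C m D e ?Bn x y) \<le> ?a * nm C (\<lambda>x y. ?An x y - ?Bn x y)"
    using nm_A_diff[of C m D e ?An ?Bn] assms(2) unfolding Mc_def by (simp add: abs_of_nonneg)
  also have "\<dots> \<le> ?b * (real n * e^2 * ?q * ?b ^ n * nm C X)"
    by (intro mult_mono ab Suc) (use a0 b1 nm_nonneg in auto)
  also have "nm C (\<lambda>x y. Bmap C m D e ?Bn x y - Amap C m D e ?Bn x y) \<le> e^2 * ?q * (?b ^ n * nm C X)"
    using nm_AB_diff[OF assms(1)] B_iter_nm[OF assms] by (meson order.trans mult_left_mono zero_le_power2 zero_le_mult_iff)
  also have "e^2 * ?q * (?b ^ n * nm C X) \<le> e^2 * ?q * (?b ^ Suc n * nm C X)"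
    using b1 nm_nonneg by (intro mult_left_mono mult_right_mono) (auto simp: power_increasing)
  finally show ?case by (simp add: algebra_simps)
qed


lemma evol_sums: assumes f: "finite C" and x: "x \<in> C" and y: "y \<in> C"
  shows "(\<lambda>j. of_real (t^j / fact j) * (lind C m D ^^ j) X x y) sums evol (lind C m D) t X x y"
proof -
  have s: "summable (\<lambda>j. inverse (fact j) * (\<bar>t\<bar> * Mc C m D)^j * nm C X)"
    by (intro summable_mult2 summable_exp)
  have "summable (\<lambda>j. of_real (t^j / fact j) * (lind C m D ^^ j) X x y)"
  proof (rule summable_comparison_test'[OF s])
    fix j
    have "norm (of_real (t^j / fact j) * (lind C m D ^^ j) X x y) = \<bar>t\<bar>^j / fact j * cmod ((lind C m D ^^ j) X x y)"
      by (simp add: norm_mult norm_divide norm_power)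
    also have "\<dots> \<le> \<bar>t\<bar>^j / fact j * (Mc C m D ^ j * nm C X)"
      by (intro mult_left_mono order.trans[OF nm_entry[OF f x y] nm_Lpow]) auto
    also have "\<dots> = inverse (fact j) * (\<bar>t\<bar> * Mc C m D)^j * nm C X"
      by (simp add: power_mult_distrib field_simps)
    finally show "norm (of_real (t^j / fact j) * (lind C m D ^^ j) X x y) \<le> inverse (fact j) * (\<bar>t\<bar> * Mc C m D)^j * nm C X" .
  qed
  thus ?thesis unfolding evol_def by (rule summable_sums)
qed

lemma bf_evol_sums: assumes f: "finite C"
  shows "(\<lambda>j. of_real (t^j / fact j) * bf C w ((lind C m D ^^ j) X) w) sums bf C w (evol (lind C m D) t X) w"
proof -
  have "(\<lambda>j. \<Sum>x\<in>C. \<Sum>y\<in>C. cnj (w x) * (of_real (t^j / fact j) * (lind C m D ^^ j) X x y) * w y)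
        sums (\<Sum>x\<in>C. \<Sum>y\<in>C. cnj (w x) * evol (lind C m D) t X x y * w y)"
    by (intro sums_sum sums_mult sums_mult2 evol_sums f)
  moreover have "(\<lambda>j. \<Sum>x\<in>C. \<Sum>y\<in>C. cnj (w x) * (of_real (t^j / fact j) * (lind C m D ^^ j) X x y) * w y)
     = (\<lambda>j. of_real (t^j / fact j) * bf C w ((lind C m D ^^ j) X) w)"
    using bf_scale[of C w _ _ w] unfolding bf_def by presburger
  ultimately show ?thesis unfolding bf_def by simp
qed


lemma binom_coeff_le: assumes "0 \<le> t" "0 < n"
  shows "real (n choose j) * (t / real n)^j \<le> t^j / fact j"
proof -
  have 1: "real (n choose j) * fact j \<le> real n ^ j"
    using binomial_fact_pow[of n j] by (metis of_nat_fact of_nat_le_iff of_nat_mult of_nat_power)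
  have "real (n choose j) * (t / real n)^j = (real (n choose j) * fact j) * t^j / (fact j * real n ^ j)"
    using assms by (simp add: power_divide field_simps)
  also have "\<dots> \<le> real n ^ j * t^j / (fact j * real n ^ j)"
    using assms 1 by (intro divide_right_mono mult_right_mono) auto
  also have "\<dots> = t^j / fact j" using assms by simp
  finally show ?thesis .
qed

lemma euler_approx: assumes f: "finite C" and t: "0 \<le> t" and n: "0 < n"
  shows "cmod (bf C w ((Amap C m D (t / real n) ^^ n) X) w - bf C w (evol (lind C m D) t X) w)
     \<le> (\<Sum>x\<in>C. cmod (w x))^2 * nm C X * (exp (t * Mc C m D) - (1 + t * Mc C m D / real n)^n)"
proof -
  let ?e = "t / real n" and ?M = "Mc C m D" and ?W = "(\<Sum>x\<in>C. cmod (w x))^2 * nm C X"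
  define a where "a j = bf C w ((lind C m D ^^ j) X) w" for j
  define b where "b j = (if j \<in> {..n} then real (n choose j) * ?e^j else 0)" for j
  have abound: "cmod (a j) \<le> ?W * ?M^j" for j
  proof -
    have "cmod (a j) \<le> (\<Sum>x\<in>C. cmod (w x))^2 * nm C ((lind C m D ^^ j) X)"
      unfolding a_def by (rule bf_bound[OF f])
    also have "\<dots> \<le> (\<Sum>x\<in>C. cmod (w x))^2 * (?M^j * nm C X)"
      by (intro mult_left_mono nm_Lpow) auto
    finally show ?thesis by (simp add: mult_ac)
  qed
  have ble: "b j \<le> t^j / fact j" for j
    unfolding b_def using binom_coeff_le[OF t n] t by auto
  have bA: "bf C w ((Amap C m D ?e ^^ n) X) w = (\<Sum>j\<in>{..n}. of_nat (n choose j) * (of_real ?e ^ j * a j))"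
    unfolding A_expand bf_sum bf_scale a_def ..
  have S1: "(\<lambda>j. of_real (b j) * a j) sums bf C w ((Amap C m D ?e ^^ n) X) w"
  proof -
    have "(\<lambda>j. if j \<in> {..n} then of_nat (n choose j) * (of_real ?e ^ j * a j) else 0) sums bf C w ((Amap C m D ?e ^^ n) X) w"
      unfolding bA by (rule sums_If_finite_set) simp
    moreover have "(\<lambda>j. if j \<in> {..n} then of_nat (n choose j) * (of_real ?e ^ j * a j) else 0) = (\<lambda>j. of_real (b j) * a j)"
      unfolding b_def by (auto simp: fun_eq_iff)
    ultimately show ?thesis by simp
  qed
  have S2: "(\<lambda>j. of_real (t^j / fact j) * a j) sums bf C w (evol (lind C m D) t X) w"
    unfolding a_def by (rule bf_evol_sums[OF f])
  have S3: "(\<lambda>j. of_real (t^j / fact j - b j) * a j) sums (bf C w (evol (lind C m D) t X) w - bf C w ((Amap C m D ?e ^^ n) X) w)"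
    using sums_diff[OF S2 S1] by (simp add: algebra_simps)
  have R1: "(\<lambda>j. (t * ?M)^j / fact j) sums exp (t * ?M)"
    using exp_converges[of "t * ?M"] by (simp add: divide_inverse mult.commute)
  have R2: "(\<lambda>j. b j * ?M^j) sums (1 + t * ?M / real n)^n"
  proof -
    have "(1 + t * ?M / real n)^n = (?e * ?M + 1)^n" by (simp add: add.commute)
    also have "\<dots> = (\<Sum>j\<in>{..n}. real (n choose j) * ?e^j * ?M^j)"
      unfolding binomial_ring by (simp add: power_mult_distrib[symmetric] mult.assoc)
    finally have eq: "(1 + t * ?M / real n)^n = (\<Sum>j\<in>{..n}. real (n choose j) * ?e^j * ?M^j)" .
    have "(\<lambda>j. if j \<in> {..n} then real (n choose j) * ?e^j * ?M^j else 0) sums (1 + t * ?M / real n)^n"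
      unfolding eq by (rule sums_If_finite_set) simp
    moreover have "(\<lambda>j. if j \<in> {..n} then real (n choose j) * ?e^j * ?M^j else 0) = (\<lambda>j. b j * ?M^j)"
      unfolding b_def by (auto simp: fun_eq_iff)
    ultimately show ?thesis by simp
  qed
  have R: "(\<lambda>j. ?W * ((t * ?M)^j / fact j - b j * ?M^j)) sums (?W * (exp (t * ?M) - (1 + t * ?M / real n)^n))"
    by (intro sums_mult sums_diff R1 R2)
  have "cmod (bf C w (evol (lind C m D) t X) w - bf C w ((Amap C m D ?e ^^ n) X) w)
     \<le> (\<Sum>j. ?W * ((t * ?M)^j / fact j - b j * ?M^j))"
    unfolding sums_unique[OF S3]
  proof (rule norm_suminf_le)
    fix j
    have nn: "0 \<le> t^j / fact j - b j" using ble[of j] by simp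
    have "cmod (of_real (t^j / fact j - b j) * a j) = (t^j / fact j - b j) * cmod (a j)"
      by (simp only: norm_mult norm_of_real abs_of_nonneg[OF nn])
    also have "\<dots> \<le> (t^j / fact j - b j) * (?W * ?M^j)"
      using ble[of j] abound[of j] by (intro mult_left_mono) auto
    also have "\<dots> = ?W * ((t * ?M)^j / fact j - b j * ?M^j)"
      by (simp add: power_mult_distrib algebra_simps)
    finally show "cmod (of_real (t^j / fact j - b j) * a j) \<le> ?W * ((t * ?M)^j / fact j - b j * ?M^j)" .
  qed (rule sums_summable[OF R])
  also have "\<dots> = ?W * (exp (t * ?M) - (1 + t * ?M / real n)^n)" by (rule sums_unique[OF R, symmetric])
  finally show ?thesis by (simp add: norm_minus_commute)
qed


lemma lower_bound: assumes f: "finite C" and w: "w \<in> vecs C" and k: "\<forall>k<m. mvec C (D k) w = (\<lambda>_. 0)"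
  and p: "pos C X" and t: "0 \<le> t"
  shows "Re (bf C w X w) \<le> Re (bf C w (evol (lind C m D) t X) w)"
proof -
  let ?M = "Mc C m D" and ?q = "nm C (Kop C m D) ^ 2" and ?W = "(\<Sum>x\<in>C. cmod (w x))^2"
  let ?g = "bf C w (evol (lind C m D) t X) w"
  define x0 where "x0 = t * ?M + t^2 * ?q"
  define c1 where "c1 = ?W * nm C X"
  define c2 where "c2 = ?W * t^2 * ?q * exp x0 * nm C X"
  have M0: "0 \<le> ?M" by (rule Mc_nonneg)
  have x00: "0 \<le> x0" unfolding x0_def using t M0 by simp
  have c10: "0 \<le> c1" unfolding c1_def using nm_nonneg by simp
  have key: "Re (bf C w X w) \<le> Re ?g + c1 * (exp (t * ?M) - (1 + t * ?M / real n)^n) + c2 / real n"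
    if n: "0 < n" for n
  proof -
    let ?e = "t / real n"
    have e0: "0 \<le> ?e" using t by simp
    let ?An = "(Amap C m D ?e ^^ n) X" and ?Bn = "(Bmap C m D ?e ^^ n) X"
    have 1: "Re (bf C w X w) \<le> Re (bf C w ?Bn w)"
      using B_iter_pos[OF f w k e0 p] by blast
    have 2: "cmod (bf C w ?An w - bf C w ?Bn w) \<le> ?W * (real n * ?e^2 * ?q * (1 + ?e * ?M + ?e^2 * ?q) ^ n * nm C X)"
    proof -
      have "cmod (bf C w ?An w - bf C w ?Bn w) = cmod (bf C w (\<lambda>x y. ?An x y - ?Bn x y) w)"
        by (simp add: bf_diff)
      also have "\<dots> \<le> ?W * nm C (\<lambda>x y. ?An x y - ?Bn x y)" by (rule bf_bound[OF f])
      also have "\<dots> \<le> ?W * (real n * ?e^2 * ?q * (1 + ?e * ?M + ?e^2 * ?q) ^ n * nm C X)"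
        by (intro mult_left_mono AB_iter_diff[OF f e0]) simp
      finally show ?thesis .
    qed
    have b: "(1 + ?e * ?M + ?e^2 * ?q) ^ n \<le> exp x0"
    proof -
      have "?e^2 * ?q \<le> t^2 * ?q / real n"
      proof -
        have "?e^2 * ?q = t^2 * ?q / (real n * real n)" by (simp add: power_divide power2_eq_square)
        also have "\<dots> \<le> t^2 * ?q / real n"
          using n by (intro divide_left_mono) (auto simp: mult_le_cancel_left1)
        finally show ?thesis .
      qed
      hence "1 + ?e * ?M + ?e^2 * ?q \<le> 1 + x0 / real n" unfolding x0_def by (simp add: add_divide_distrib)
      hence "(1 + ?e * ?M + ?e^2 * ?q) ^ n \<le> (1 + x0 / real n) ^ n"
        using t M0 by (intro power_mono) auto
      also have "\<dots> \<le> exp x0" using x00 n by (intro exp_ge_one_plus_x_over_n_power_n) auto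
      finally show ?thesis .
    qed
    have 3: "?W * (real n * ?e^2 * ?q * (1 + ?e * ?M + ?e^2 * ?q) ^ n * nm C X) \<le> c2 / real n"
    proof -
      have "real n * ?e^2 = t^2 / real n" using n by (simp add: power2_eq_square)
      hence "?W * (real n * ?e^2 * ?q * (1 + ?e * ?M + ?e^2 * ?q) ^ n * nm C X)
          = ?W * t^2 * ?q * (1 + ?e * ?M + ?e^2 * ?q) ^ n * nm C X / real n" by (simp add: mult_ac)
      also have "\<dots> \<le> ?W * t^2 * ?q * exp x0 * nm C X / real n"
        by (intro divide_right_mono mult_right_mono mult_left_mono b nm_nonneg) auto
      finally show ?thesis unfolding c2_def .
    qed
    have 4: "cmod (bf C w ?An w - ?g) \<le> c1 * (exp (t * ?M) - (1 + t * ?M / real n)^n)"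
      unfolding c1_def using euler_approx[OF f t n] .
    have "Re (bf C w ?Bn w) \<le> Re ?g + cmod (bf C w ?An w - ?g) + cmod (bf C w ?An w - bf C w ?Bn w)"
    proof -
      have "Re (bf C w ?Bn w) = Re ?g + Re (bf C w ?An w - ?g) - Re (bf C w ?An w - bf C w ?Bn w)" by simp
      thus ?thesis using abs_Re_le_cmod[of "bf C w ?An w - ?g"] abs_Re_le_cmod[of "bf C w ?An w - bf C w ?Bn w"]
        by linarith
    qed
    thus ?thesis using 1 2 3 4 by linarith
  qed
  have lim: "(\<lambda>n. Re ?g + c1 * (exp (t * ?M) - (1 + t * ?M / real n)^n) + c2 / real n) \<longlonglongrightarrow> Re ?g + c1 * (exp (t * ?M) - exp (t * ?M)) + 0"
    by (intro tendsto_intros tendsto_exp_limit_sequentially lim_const_over_n)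
  have "Re (bf C w X w) \<le> Re ?g + c1 * (exp (t * ?M) - exp (t * ?M)) + 0"
  proof (rule LIMSEQ_le_const[OF lim])
    show "\<exists>N. \<forall>n\<ge>N. Re (bf C w X w) \<le> Re ?g + c1 * (exp (t * ?M) - (1 + t * ?M / real n)^n) + c2 / real n"
      using key by (intro exI[of _ 1] allI impI) simp
  qed
  thus ?thesis by simp
qed


lemma bf_rank1: "bf C u (\<lambda>x y. v x * cnj (v y) * r) u = r * (inner_c C u v * cnj (inner_c C u v))"
  unfolding bf_def inner_c_def by (simp add: sum_distrib_left sum_distrib_right mult_ac)

lemma inner_mvec_bf: "inner_c C u (mvec C A u) = bf C u A u"
  unfolding inner_c_def mvec_def bf_def by (simp add: sum_distrib_left mult.assoc)

lemma merge_cfgs: "u \<in> cfgs n d \<Longrightarrow> z \<in> cfgs n d \<Longrightarrow> merge N u z \<in> cfgs n d"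
  unfolding cfgs_def merge_def by auto

lemma merge_restr: "merge N (restr N y) z = merge N y z"
  unfolding merge_def restr_def by (auto simp: fun_eq_iff)

lemma restr_merge: "restr N (merge N y z) = restr N y"
  unfolding merge_def restr_def by (auto simp: fun_eq_iff)

lemma S_zero:
  assumes x: "x \<in> cfgs n d" and \<zeta>: "\<zeta> \<in> cfgs n d"
    and DN: "\<forall>x\<in>cfgs n d. \<forall>y\<in>cfgs n d. Dk x y = tensor_id M DN x y"
    and kill: "mvec (cfgs n d) Dk \<Psi> = (\<lambda>_. 0)"
  shows "(\<Sum>y\<in>cfgs n d. if (\<forall>a. a \<notin> M \<longrightarrow> x a = y a) then DN (restr M x) (restr M y) * \<Psi> (merge M y \<zeta>) else 0) = 0"
proof -
  let ?C = "cfgs n d"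
  let ?x' = "merge M x \<zeta>"
  have x': "?x' \<in> ?C" using merge_cfgs[OF x \<zeta>] .
  let ?Y1 = "{y\<in>?C. \<forall>a. a \<notin> M \<longrightarrow> x a = y a}"
  let ?Y2 = "{y\<in>?C. \<forall>a. a \<notin> M \<longrightarrow> ?x' a = y a}"
  have "0 = mvec ?C Dk \<Psi> ?x'" using kill by simp
  also have "\<dots> = (\<Sum>y\<in>?C. Dk ?x' y * \<Psi> y)" using x' unfolding mvec_def by simp
  also have "\<dots> = (\<Sum>y\<in>?C. if (\<forall>a. a \<notin> M \<longrightarrow> ?x' a = y a) then DN (restr M x) (restr M y) * \<Psi> y else 0)"
    using DN x' unfolding tensor_id_def by (intro sum.cong refl) (auto simp: restr_merge)
  also have "\<dots> = (\<Sum>y\<in>?Y2. DN (restr M x) (restr M y) * \<Psi> y)"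
    by (simp add: sum.inter_filter[symmetric] finite_cfgs)
  finally have z2: "(\<Sum>y\<in>?Y2. DN (restr M x) (restr M y) * \<Psi> y) = 0" by simp
  have "(\<Sum>y\<in>?C. if (\<forall>a. a \<notin> M \<longrightarrow> x a = y a) then DN (restr M x) (restr M y) * \<Psi> (merge M y \<zeta>) else 0)
     = (\<Sum>y\<in>?Y1. DN (restr M x) (restr M y) * \<Psi> (merge M y \<zeta>))"
    by (simp add: sum.inter_filter[symmetric] finite_cfgs)
  also have "\<dots> = (\<Sum>y\<in>?Y2. DN (restr M x) (restr M y) * \<Psi> y)"
  proof (rule sum.reindex_bij_witness[where j = "\<lambda>y. merge M y \<zeta>" and i = "\<lambda>y. merge M y x"])
    fix y assume y: "y \<in> ?Y1"
    show "merge M (merge M y \<zeta>) x = y" using y unfolding merge_def by (auto simp: fun_eq_iff)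
    show "merge M y \<zeta> \<in> ?Y2" using y merge_cfgs[OF _ \<zeta>] unfolding merge_def by auto
    show "DN (restr M x) (restr M (merge M y \<zeta>)) * \<Psi> (merge M y \<zeta>) = DN (restr M x) (restr M y) * \<Psi> (merge M y \<zeta>)"
      by (simp add: restr_merge)
  next
    fix y assume y: "y \<in> ?Y2"
    show "merge M (merge M y x) \<zeta> = y" using y unfolding merge_def by (auto simp: fun_eq_iff)
    show "merge M y x \<in> ?Y1" using y merge_cfgs[OF _ x] unfolding merge_def by auto
  qed
  finally show ?thesis using z2 by simp
qed

lemma kill_Hw: assumes wH: "w \<in> Hw (cfgs n d) m N \<Psi>" and ql: "\<forall>k<m. ql_op (cfgs n d) (N k) (D k)"
    and kill: "\<forall>k<m. mvec (cfgs n d) (D k) \<Psi> = (\<lambda>_. 0)"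
  shows "\<forall>k<m. mvec (cfgs n d) (D k) w = (\<lambda>_. 0)"
proof (intro allI impI)
  fix k assume k: "k < m"
  let ?C = "cfgs n d" and ?M = "N k"
  let ?T = "tensor_id ?M (ptrace ?C ?M (proj \<Psi>))"
  let ?Z = "{z \<in> ?C. \<forall>a\<in>?M. z a = 0}"
  obtain DN where DN: "\<forall>x\<in>?C. \<forall>y\<in>?C. D k x y = tensor_id ?M DN x y" using ql k unfolding ql_op_def by blast
  have "w \<in> supp_op ?C ?T" using wH k unfolding Hw_def H0_def by blast
  then obtain u where u: "w = mvec ?C ?T u" unfolding supp_op_def by blast
  have inner0: "(\<Sum>y\<in>?C. D k x y * ?T y z) = 0" if x: "x \<in> ?C" for x z
  proof -
    let ?ag = "\<lambda>x y. \<forall>a. a \<notin> ?M \<longrightarrow> x a = y a"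
    have "(\<Sum>y\<in>?C. D k x y * ?T y z) = (\<Sum>y\<in>?C. \<Sum>\<zeta>\<in>?Z. (if ?ag x z then cnj (\<Psi> (merge ?M z \<zeta>)) else 0)
        * (if ?ag x y then DN (restr ?M x) (restr ?M y) * \<Psi> (merge ?M y \<zeta>) else 0))"
    proof (rule sum.cong[OF refl])
      fix y assume y: "y \<in> ?C"
      show "D k x y * ?T y z = (\<Sum>\<zeta>\<in>?Z. (if ?ag x z then cnj (\<Psi> (merge ?M z \<zeta>)) else 0)
        * (if ?ag x y then DN (restr ?M x) (restr ?M y) * \<Psi> (merge ?M y \<zeta>) else 0))"
      proof (cases "?ag x y")
        case True
        hence e: "?ag y z = ?ag x z" by auto
        show ?thesis
        proof (cases "?ag x z")
          case True2: True
          hence "?ag y z" using e by simp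
          thus ?thesis using DN x y True True2 unfolding tensor_id_def ptrace_def proj_def merge_restr
            by (simp add: sum_distrib_left mult_ac)
        next
          case False2: False
          hence nag: "\<not> ?ag y z" using e by simp
          have "?T y z = 0" unfolding tensor_id_def by (simp only: if_not_P[OF nag] mult_zero_right)
          moreover have "(if ?ag x z then cnj (\<Psi> (merge ?M z \<zeta>)) else 0) = 0" for \<zeta>
            by (rule if_not_P[OF False2])
          ultimately show ?thesis by simp
        qed
      next
        case False
        have "D k x y = 0" using DN x y unfolding tensor_id_def by (simp only: if_not_P[OF False] mult_zero_right)
        moreover have "(if ?ag x y then DN (restr ?M x) (restr ?M y) * \<Psi> (merge ?M y \<zeta>) else 0) = 0" for \<zeta>
          by (rule if_not_P[OF False])
        ultimately show ?thesis by simp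
      qed
    qed
    also have "\<dots> = (\<Sum>\<zeta>\<in>?Z. \<Sum>y\<in>?C. (if ?ag x z then cnj (\<Psi> (merge ?M z \<zeta>)) else 0)
        * (if ?ag x y then DN (restr ?M x) (restr ?M y) * \<Psi> (merge ?M y \<zeta>) else 0))"
      by (rule sum.swap)
    also have "\<dots> = (\<Sum>\<zeta>\<in>?Z. (if ?ag x z then cnj (\<Psi> (merge ?M z \<zeta>)) else 0)
        * (\<Sum>y\<in>?C. if ?ag x y then DN (restr ?M x) (restr ?M y) * \<Psi> (merge ?M y \<zeta>) else 0))"
      by (simp only: sum_distrib_left)
    also have "\<dots> = 0"
      using S_zero[OF x _ DN] kill k by (intro sum.neutral) auto
    finally show ?thesis .
  qed
  show "mvec ?C (D k) w = (\<lambda>_. 0)"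
  proof (rule ext)
    fix x
    show "mvec ?C (D k) w x = 0"
    proof (cases "x \<in> ?C")
      case True
      have "mvec ?C (D k) w x = (\<Sum>y\<in>?C. D k x y * (\<Sum>z\<in>?C. ?T y z * u z))"
        using True unfolding u mvec_def by simp
      also have "\<dots> = (\<Sum>y\<in>?C. \<Sum>z\<in>?C. D k x y * ?T y z * u z)"
        by (simp add: sum_distrib_left mult.assoc)
      also have "\<dots> = (\<Sum>z\<in>?C. (\<Sum>y\<in>?C. D k x y * ?T y z) * u z)"
        by (subst sum.swap) (simp add: sum_distrib_right)
      also have "\<dots> = 0" using inner0[OF True] by simp
      finally show ?thesis .
    qed (simp add: mvec_def)
  qed
qed

theorem lemma2:
  fixes n :: nat and d :: "nat \<Rightarrow> nat" and m :: nat
    and N :: "nat \<Rightarrow> nat set" and D :: "nat \<Rightarrow> op"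
    and \<Psi> :: vec and H' :: "vec set"
  assumes dims: "\<forall>a<n. 0 < d a"
    and nbhd: "\<forall>k<m. N k \<subset> {..<n}"
    and psi: "\<Psi> \<in> vecs (cfgs n d)" "inner_c (cfgs n d) \<Psi> \<Psi> = 1"
    and sub: "is_subspace (cfgs n d) H'"
    and ql: "\<forall>k<m. ql_op (cfgs n d) (N k) (D k)"
    and kill: "\<forall>k<m. mvec (cfgs n d) (D k) \<Psi> = (\<lambda>_. 0)"
    and stable: "cond_asym_stable (cfgs n d) (lind (cfgs n d) m D) (proj \<Psi>) H'"
  shows "H' \<subseteq> orth_compl (cfgs n d) (Hw (cfgs n d) m N \<Psi>)"
proof
  let ?C = "cfgs n d"
  have f: "finite ?C" by (rule finite_cfgs)
  fix v assume vH: "v \<in> H'"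
  have vV: "v \<in> vecs ?C" using sub vH unfolding is_subspace_def by blast
  show "v \<in> orth_compl ?C (Hw ?C m N \<Psi>)"
    unfolding orth_compl_def
  proof (intro CollectI conjI ballI vV, rule ccontr)
    fix w assume wH: "w \<in> Hw ?C m N \<Psi>" and ne: "inner_c ?C w v \<noteq> 0"
    have wV: "w \<in> vecs ?C" using wH unfolding Hw_def H0_def by blast
    have wPsi: "inner_c ?C \<Psi> w = 0" using wH unfolding Hw_def by blast
    have wk: "\<forall>k<m. mvec ?C (D k) w = (\<lambda>_. 0)" using kill_Hw[OF wH ql kill] .
    define s where "s = (\<Sum>x\<in>?C. (cmod (v x))^2)"
    have vv: "inner_c ?C v v = of_real s"
      unfolding inner_c_def s_def by (simp only: of_real_sum complex_norm_square) (simp add: mult.commute)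
    have s0: "0 < s"
    proof (rule ccontr)
      assume "\<not> 0 < s"
      hence "s = 0" unfolding s_def using sum_nonneg[of ?C "\<lambda>x. (cmod (v x))^2"] by simp
      hence "\<forall>x\<in>?C. (cmod (v x))^2 = 0" unfolding s_def using f by (subst (asm) sum_nonneg_eq_0_iff) auto
      hence "\<forall>x\<in>?C. v x = 0" by simp
      hence "inner_c ?C w v = 0" unfolding inner_c_def by simp
      thus False using ne by simp
    qed
    define \<rho>0 where "\<rho>0 = (\<lambda>x y. v x * cnj (v y) * of_real (1 / s))"
    have bf\<rho>: "bf ?C u \<rho>0 u = of_real ((cmod (inner_c ?C u v))^2 / s)" for u
      unfolding \<rho>0_def bf_rank1 complex_norm_square[symmetric] by simp
    have pos0: "pos ?C \<rho>0" unfolding pos_def bf\<rho> using s0 by simp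
    have dens: "density ?C \<rho>0"
      unfolding density_def inner_mvec_bf bf\<rho>
    proof (intro conjI ballI)
      show "trace_c ?C \<rho>0 = 1"
        using vv s0 unfolding trace_c_def \<rho>0_def inner_c_def
        by (simp add: sum_divide_distrib[symmetric] mult.commute)
    qed (use s0 in auto)
    have supp: "supp_op ?C \<rho>0 \<subseteq> H'"
    proof
      fix z assume "z \<in> supp_op ?C \<rho>0"
      then obtain u where z: "z = mvec ?C \<rho>0 u" unfolding supp_op_def by blast
      have "z = (\<lambda>x. (of_real (1/s) * (\<Sum>y\<in>?C. cnj (v y) * u y)) * v x)"
        unfolding z mvec_def \<rho>0_def using vV unfolding vecs_def
        by (auto simp: fun_eq_iff sum_distrib_left mult_ac)
      thus "z \<in> H'" using sub vH unfolding is_subspace_def by blast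
    qed
    have conv: "\<forall>x\<in>?C. \<forall>y\<in>?C. ((\<lambda>t. evol (lind ?C m D) t \<rho>0 x y) \<longlongrightarrow> proj \<Psi> x y) at_top"
      using stable dens supp unfolding cond_asym_stable_def by blast
    have "((\<lambda>t. bf ?C w (evol (lind ?C m D) t \<rho>0) w) \<longlongrightarrow> bf ?C w (proj \<Psi>) w) at_top"
      unfolding bf_def using conv by (intro tendsto_sum tendsto_mult tendsto_const) auto
    moreover have "bf ?C w (proj \<Psi>) w = 0"
    proof -
      have "bf ?C w (proj \<Psi>) w = bf ?C w (\<lambda>x y. \<Psi> x * cnj (\<Psi> y) * of_real 1) w"
        unfolding proj_def by simp
      also have "\<dots> = inner_c ?C w \<Psi> * cnj (inner_c ?C w \<Psi>)" unfolding bf_rank1 by simp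
      also have "cnj (inner_c ?C w \<Psi>) = inner_c ?C \<Psi> w"
        unfolding inner_c_def by (simp add: mult.commute)
      finally show ?thesis using wPsi by simp
    qed
    ultimately have lim: "((\<lambda>t. Re (bf ?C w (evol (lind ?C m D) t \<rho>0) w)) \<longlongrightarrow> 0) at_top"
      using tendsto_Re by fastforce
    have "Re (bf ?C w \<rho>0 w) \<le> 0"
    proof (rule tendsto_lowerbound[OF lim])
      show "\<forall>\<^sub>F t in at_top. Re (bf ?C w \<rho>0 w) \<le> Re (bf ?C w (evol (lind ?C m D) t \<rho>0) w)"
        using eventually_ge_at_top[of "0::real"] by (rule eventually_mono) (rule lower_bound[OF f wV wk pos0])
    qed simp
    moreover have "0 < Re (bf ?C w \<rho>0 w)" unfolding bf\<rho> using s0 ne by simp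
    ultimately show False by simp
  qed
qed

end
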